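(* Let $n$ be a positive integer, $m=1$, $A\in\mathbb{C}^{n\times n}$, $B\in\mathbb{C}^{n\times 1}$ nonzero, $(A,B)$ reachable and all eigenvalues of $A$ of modulus $<1$. Let $\mathbf{R}\in\mathbb{C}^{n\times n}$ be Hermitian, $\mathbf{R}\geq0$ and singular, with $\mathbf{R}-A\mathbf{R}A^*=BH+H^*B^*$ for some $H\in\mathbb{C}^{1\times n}$. Then $B^*\Pi_{\mathcal{N}(\mathbf{R})}B$ is invertible (i.e. nonzero).
   Context: $\mathcal{N}(\mathbf{R})$ is the null space of $\mathbf{R}$ and $\Pi_{\mathcal{N}(\mathbf{R})}$ the orthogonal projection onto it. $(A,B)$ reachable means $\operatorname{rank}[B,AB,\dots,A^{n-1}B]=n$. *)

theory Defs
  imports "HOL-Analysis.Analysis"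
begin

text \<open>Complex n x n matrices are complex^'n^'n; column vectors (n x 1) and
  row vectors (1 x n) are both represented as complex^'n.\<close>

definition cadj :: "complex^'n^'m \<Rightarrow> complex^'m^'n" where
  "cadj M = (\<chi> i j. cnj (M $ j $ i))"

definition cinner :: "complex^'n \<Rightarrow> complex^'n \<Rightarrow> complex" where
  "cinner x y = (\<Sum>i\<in>UNIV. cnj (x $ i) * y $ i)"

primrec mpow :: "complex^'n^'n \<Rightarrow> nat \<Rightarrow> complex^'n^'n" where
  "mpow A 0 = mat 1"
| "mpow A (Suc k) = A ** mpow A k"

definition hermitian :: "complex^'n^'n \<Rightarrow> bool" where
  "hermitian R \<longleftrightarrow> cadj R = R"

definition psd :: "complex^'n^'n \<Rightarrow> bool" where
  "psd R \<longleftrightarrow> hermitian R \<and> (\<forall>x. 0 \<le> Re (cinner x (R *v x)))"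

definition eigenvalue_of :: "complex^'n^'n \<Rightarrow> complex \<Rightarrow> bool" where
  "eigenvalue_of A c \<longleftrightarrow> (\<exists>v. v \<noteq> 0 \<and> A *v v = c *s v)"

text \<open>Reachability: rank [B, AB, ..., A^(n-1) B] = n, with the rank written as the
  dimension of the span of the columns.\<close>
definition reachable :: "complex^'n^'n \<Rightarrow> complex^'n \<Rightarrow> bool" where
  "reachable A B \<longleftrightarrow>
     vec.dim (vec.span {mpow A k *v B | k. k < CARD('n)}) = CARD('n)"

definition null_space :: "complex^'n^'m \<Rightarrow> (complex^'n) set" where
  "null_space R = {x. R *v x = 0}"

definition is_orth_proj :: "complex^'n^'n \<Rightarrow> (complex^'n) set \<Rightarrow> bool" where
  "is_orth_proj P S \<longleftrightarrow> P ** P = P \<and> cadj P = P \<and> range (\<lambda>x. P *v x) = S"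

definition orth_proj :: "(complex^'n) set \<Rightarrow> complex^'n^'n" where
  "orth_proj S = (THE P. is_orth_proj P S)"

definition outer :: "complex^'n \<Rightarrow> complex^'m \<Rightarrow> complex^'m^'n" where
  "outer b h = (\<chi> i j. b $ i * h $ j)"

end

theory Submission imports Defs begin

lemma cinner_add_right: "cinner x (y + z) = cinner x y + cinner x z"
  by (simp add: cinner_def distrib_left sum.distrib)
lemma cinner_diff_right: "cinner x (y - z) = cinner x y - cinner x z"
  by (simp add: cinner_def right_diff_distrib sum_subtractf)
lemma cinner_add_left: "cinner (x + y) z = cinner x z + cinner y z"
  by (simp add: cinner_def distrib_right sum.distrib)
lemma cinner_diff_left: "cinner (x - y) z = cinner x z - cinner y z"
  by (simp add: cinner_def left_diff_distrib sum_subtractf)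
lemma cinner_scale_right: "cinner x (c *s y) = c * cinner x y"
  by (simp add: cinner_def sum_distrib_left mult_ac)
lemma cinner_scale_left: "cinner (c *s x) y = cnj c * cinner x y"
  by (simp add: cinner_def sum_distrib_left mult_ac)
lemma cinner_zero_right[simp]: "cinner x 0 = 0" by (simp add: cinner_def)
lemma cinner_zero_left[simp]: "cinner 0 x = 0" by (simp add: cinner_def)
lemma cinner_cnj: "cnj (cinner x y) = cinner y x"
  by (simp add: cinner_def mult.commute)
lemma cinner_sum_right: "finite I \<Longrightarrow> cinner x (sum f I) = (\<Sum>i\<in>I. cinner x (f i))"
  by (induct I rule: finite_induct) (auto simp: cinner_add_right)
lemma cnj_mult_self: "cnj z * z = complex_of_real ((cmod z)^2)"
proof -
  have "cnj z * z = z * cnj z" by (rule mult.commute)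
  also have "\<dots> = complex_of_real ((cmod z)^2)" by (rule complex_norm_square[symmetric])
  finally show ?thesis .
qed
lemma cinner_self: "cinner x x = (\<Sum>i\<in>UNIV. of_real ((cmod (x $ i))^2))"
  unfolding cinner_def cnj_mult_self ..
lemma Re_cinner_self: "Re (cinner x x) = (\<Sum>i\<in>UNIV. (cmod (x $ i))^2)"
  by (simp only: cinner_self Re_sum Re_complex_of_real)
lemma cinner_self_eq_0: "cinner x x = 0 \<longleftrightarrow> x = 0"
proof
  assume a: "cinner x x = 0"
  have "(\<Sum>i\<in>UNIV. (cmod (x $ i))^2) = 0" using Re_cinner_self[of x] a by simp
  then have "\<forall>i\<in>UNIV. (cmod (x $ i))^2 = 0"
    by (subst (asm) sum_nonneg_eq_0_iff) auto
  then have "\<And>i. x $ i = 0" by simp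
  then show "x = 0" by (simp add: vec_eq_iff)
qed (simp add: cinner_def)
lemma inner_cinner: "inner x y = Re (cinner x y)"
  by (simp add: inner_vec_def cinner_def inner_complex_def Re_sum)
lemma cinner_adj: "cinner (M *v y) z = cinner y (cadj M *v z)"
  by (simp add: cinner_def cadj_def matrix_vector_mult_def sum_distrib_left sum_distrib_right
      mult_ac) (rule sum.swap)
lemma cinner_adj2: "cinner y (M *v z) = cinner (cadj M *v y) z"
  by (simp add: cinner_def cadj_def matrix_vector_mult_def sum_distrib_left sum_distrib_right
      mult_ac) (rule sum.swap)
lemma scaleR_vec: "(r::real) *\<^sub>R (x::complex^'n) = complex_of_real r *s x"
proof (rule vec_eq_iff[THEN iffD2], rule allI)
  fix i
  have "(r *\<^sub>R x) $ i = r *\<^sub>R (x $ i)" by (rule vector_scaleR_component)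
  also have "\<dots> = complex_of_real r * x $ i" by (rule scaleR_conv_of_real)
  also have "\<dots> = (complex_of_real r *s x) $ i" unfolding vector_scalar_mult_def by (rule vec_lambda_beta[symmetric])
  finally show "(r *\<^sub>R x) $ i = (complex_of_real r *s x) $ i" .
qed

lemma null_scale: "x \<in> null_space R \<Longrightarrow> c *s x \<in> null_space R"
  by (simp add: null_space_def vector_scalar_commute)
lemma null_add: "x \<in> null_space R \<Longrightarrow> y \<in> null_space R \<Longrightarrow> x + y \<in> null_space R"
  by (simp add: null_space_def matrix_vector_right_distrib)
lemma null_diff: "x \<in> null_space R \<Longrightarrow> y \<in> null_space R \<Longrightarrow> x - y \<in> null_space R"
  by (simp add: null_space_def matrix_vector_mult_diff_distrib)
lemma null_subspace: "subspace (null_space (R::complex^'n^'m))"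
  unfolding subspace_def
  by (auto simp: null_add scaleR_vec null_scale) (simp add: null_space_def)

lemma decomp_exists:
  fixes R :: "complex^'n^'m"
  shows "\<exists>y\<in>null_space R. \<forall>s\<in>null_space R. cinner s (x - y) = 0"
proof -
  obtain y z where y: "y \<in> span (null_space R)"
    and z: "\<And>w. w \<in> span (null_space R) \<Longrightarrow> orthogonal z w" and xyz: "x = y + z"
    using orthogonal_subspace_decomp_exists by blast
  have sp: "span (null_space R) = null_space R" by (rule span_eq_iff[THEN iffD2, OF null_subspace])
  have "cinner s (x - y) = 0" if s: "s \<in> null_space R" for s
  proof -
    have "Re (cinner z s) = 0" using z[of s] s sp by (simp add: orthogonal_def inner_cinner)
    moreover have "Re (cinner z (\<i> *s s)) = 0"
      using z[of "\<i> *s s"] null_scale[OF s] sp by (simp add: orthogonal_def inner_cinner)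
    ultimately have "cinner z s = 0" by (simp add: cinner_scale_right complex_eq_iff)
    then have "cinner s z = 0" by (metis cinner_cnj complex_cnj_zero)
    then show ?thesis using xyz by simp
  qed
  then show ?thesis using y sp by blast
qed

lemma decomp_unique:
  assumes "y1 \<in> null_space R" "\<forall>s\<in>null_space R. cinner s (x - y1) = 0"
    and "y2 \<in> null_space R" "\<forall>s\<in>null_space R. cinner s (x - y2) = 0"
  shows "y1 = y2"
proof -
  have d: "y1 - y2 \<in> null_space R" using assms null_diff by blast
  have "cinner (y1 - y2) (y1 - y2) = cinner (y1 - y2) (x - y2) - cinner (y1 - y2) (x - y1)"
    by (simp add: cinner_diff_right)
  also have "\<dots> = 0" using assms d by simp
  finally have "y1 - y2 = 0" using cinner_self_eq_0 by blast
  then show ?thesis by simp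
qed

definition proj :: "complex^'n^'m \<Rightarrow> complex^'n \<Rightarrow> complex^'n" where
  "proj R x = (THE y. y \<in> null_space R \<and> (\<forall>s\<in>null_space R. cinner s (x - y) = 0))"

lemma proj_char:
  "proj R x \<in> null_space R \<and> (\<forall>s\<in>null_space R. cinner s (x - proj R x) = 0)"
proof -
  obtain y where y: "y \<in> null_space R" "\<forall>s\<in>null_space R. cinner s (x - y) = 0"
    using decomp_exists by blast
  show ?thesis unfolding proj_def
    by (rule theI[of _ y]) (use y decomp_unique in blast)+
qed

lemma proj_eqI:
  assumes "y \<in> null_space R" "\<forall>s\<in>null_space R. cinner s (x - y) = 0"
  shows "proj R x = y"
  using decomp_unique[OF proj_char[THEN conjunct1] proj_char[THEN conjunct2] assms] .

lemma proj_id: "s \<in> null_space R \<Longrightarrow> proj R s = s"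
  by (rule proj_eqI) auto

lemma proj_orth_left: "s \<in> null_space R \<Longrightarrow> cinner (x - proj R x) s = 0"
  using proj_char[of R x] by (metis cinner_cnj complex_cnj_zero)

lemma proj_selfadj: "cinner u (proj R v) = cinner (proj R u) v"
proof -
  have "cinner u (proj R v) = cinner (proj R u) (proj R v) + cinner (u - proj R u) (proj R v)"
    by (simp add: cinner_diff_left)
  also have "\<dots> = cinner (proj R u) (proj R v)"
    using proj_orth_left[OF proj_char[THEN conjunct1]] by simp
  also have "\<dots> = cinner (proj R u) v - cinner (proj R u) (v - proj R v)"
    by (simp add: cinner_diff_right)
  also have "\<dots> = cinner (proj R u) v"
  proof -
    have "cinner (proj R u) (v - proj R v) = 0" using proj_char[of R v] proj_char[of R u] by blast
    then show ?thesis by simp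
  qed
  finally show ?thesis .
qed

definition PM :: "complex^'n^'m \<Rightarrow> complex^'n^'n" where
  "PM R = (\<chi> i j. proj R (axis j 1) $ i)"

lemma cinner_axis_left: "cinner (axis i 1) v = v $ i"
proof -
  have "\<And>k. cnj (axis i 1 $ k) * v $ k = (if k = i then v$k else 0)"
    by (auto simp: axis_def)
  then show ?thesis unfolding cinner_def by simp
qed

lemma PM_apply: "PM R *v x = proj R x"
proof -
  define y where "y = (\<Sum>j\<in>UNIV. x $ j *s proj R (axis j 1))"
  have "PM R *v x = y"
    by (simp add: y_def PM_def vec_eq_iff matrix_vector_mult_def sum_component mult.commute)
  moreover have "proj R x = y"
  proof (rule proj_eqI)
    have "R *v proj R (axis j 1) = 0" for j using proj_char[of R "axis j 1"] by (simp add: null_space_def)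
    then have sum0: "\<And>j i. (\<Sum>k\<in>UNIV. R $ i $ k * proj R (axis j 1) $ k) = 0"
      by (simp add: matrix_vector_mult_def vec_eq_iff)
    have "(R *v y) $ i = 0" for i
    proof -
      have "(R *v y) $ i = (\<Sum>k\<in>UNIV. R $ i $ k * (\<Sum>j\<in>UNIV. x $ j * proj R (axis j 1) $ k))"
        by (simp add: y_def matrix_vector_mult_def sum_component)
      also have "\<dots> = (\<Sum>k\<in>UNIV. \<Sum>j\<in>UNIV. x $ j * (R $ i $ k * proj R (axis j 1) $ k))"
        by (simp add: sum_distrib_left mult_ac)
      also have "\<dots> = (\<Sum>j\<in>UNIV. \<Sum>k\<in>UNIV. x $ j * (R $ i $ k * proj R (axis j 1) $ k))"
        by (rule sum.swap)
      also have "\<dots> = (\<Sum>j\<in>UNIV. x $ j * (\<Sum>k\<in>UNIV. R $ i $ k * proj R (axis j 1) $ k))"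
        by (simp add: sum_distrib_left)
      also have "\<dots> = 0" using sum0 by simp
      finally show ?thesis .
    qed
    then have "R *v y = 0" by (simp add: vec_eq_iff)
    then show "y \<in> null_space R" by (simp add: null_space_def)
    show "\<forall>s\<in>null_space R. cinner s (x - y) = 0"
    proof
      fix s assume s: "s \<in> null_space R"
      have e: "cinner s (axis j 1) = cinner s (proj R (axis j 1))" for j
        using proj_char[of R "axis j 1"] s by (simp add: cinner_diff_right)
      have "x = (\<Sum>j\<in>UNIV. x $ j *s axis j 1)"
        by (simp add: vec_eq_iff sum_component axis_def if_distrib cong: if_cong)
      then have "cinner s x = (\<Sum>j\<in>UNIV. x $ j * cinner s (axis j 1))"
        by (metis (no_types, lifting) cinner_scale_right cinner_sum_right finite sum.cong)
      also have "\<dots> = cinner s y"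
        by (simp add: y_def e cinner_sum_right cinner_scale_right)
      finally show "cinner s (x - y) = 0" by (simp add: cinner_diff_right)
    qed
  qed
  ultimately show ?thesis by simp
qed


lemma PM_is_orth_proj: "is_orth_proj (PM R) (null_space R)"
  unfolding is_orth_proj_def
proof (intro conjI)
  show "PM R ** PM R = PM R"
    unfolding matrix_eq
    by (simp add: matrix_vector_mul_assoc[symmetric] PM_apply proj_id proj_char)
  show "cadj (PM R) = PM R"
  proof -
    have "cnj (PM R $ j $ i) = PM R $ i $ j" for i j
    proof -
      have "cnj (PM R $ j $ i) = cnj (cinner (axis j 1) (proj R (axis i 1)))"
        by (simp add: PM_def cinner_axis_left)
      also have "\<dots> = cinner (proj R (axis i 1)) (axis j 1)" by (simp add: cinner_cnj)
      also have "\<dots> = cinner (axis i 1) (proj R (axis j 1))" by (simp add: proj_selfadj)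
      also have "\<dots> = PM R $ i $ j" by (simp add: PM_def cinner_axis_left)
      finally show ?thesis .
    qed
    then show ?thesis by (simp add: cadj_def vec_eq_iff)
  qed
  show "range ((*v) (PM R)) = null_space R"
  proof
    show "range ((*v) (PM R)) \<subseteq> null_space R" by (auto simp: PM_apply proj_char)
    show "null_space R \<subseteq> range ((*v) (PM R))"
    proof
      fix s assume "s \<in> null_space R"
      then have "s = PM R *v s" by (simp add: PM_apply proj_id)
      then show "s \<in> range ((*v) (PM R))" by blast
    qed
  qed
qed

lemma orth_proj_unique:
  assumes "is_orth_proj Q (null_space R)"
  shows "Q = PM R"
  unfolding matrix_eq PM_apply
proof
  fix x
  have QQ: "Q ** Q = Q" and adj: "cadj Q = Q" and rg: "range ((*v) Q) = null_space R"
    using assms by (auto simp: is_orth_proj_def)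
  show "Q *v x = proj R x"
  proof (rule proj_eqI[symmetric])
    show "Q *v x \<in> null_space R" using rg by blast
    show "\<forall>s\<in>null_space R. cinner s (x - Q *v x) = 0"
    proof
      fix s assume "s \<in> null_space R"
      then obtain y where y: "s = Q *v y" using rg by blast
      have "cinner s (x - Q *v x) = cinner y (Q *v (x - Q *v x))"
        unfolding y cinner_adj adj ..
      also have "\<dots> = 0"
        by (simp add: matrix_vector_mult_diff_distrib matrix_vector_mul_assoc QQ)
      finally show "cinner s (x - Q *v x) = 0" .
    qed
  qed
qed

lemma orth_proj_eq: "orth_proj (null_space R) = PM R"
  unfolding orth_proj_def
  by (rule the_equality) (auto intro: PM_is_orth_proj orth_proj_unique)


lemma psd_zero:
  assumes "psd R" and "cinner y (R *v y) = 0"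
  shows "R *v y = 0"
proof -
  have herm: "cadj R = R" and pos: "\<And>x. 0 \<le> Re (cinner x (R *v x))"
    using assms(1) by (auto simp: psd_def hermitian_def)
  define w where "w = R *v y"
  define Q where "Q = Re (cinner w w)"
  define C where "C = Re (cinner w (R *v w))"
  have C0: "0 \<le> C" using pos by (simp add: C_def)
  have Q0: "0 \<le> Q" by (simp add: Q_def Re_cinner_self sum_nonneg)
  have e1: "cinner y (R *v w) = cinner w w"
    by (simp add: cinner_adj2 herm w_def)
  have key: "0 \<le> - 2 * t * Q + t^2 * C" for t :: real
  proof -
    define a where "a = complex_of_real t"
    have "cinner (y - a *s w) (R *v (y - a *s w))
       = cinner y (R *v y) - a * cinner y (R *v w) - cnj a * cinner w (R *v y)
         + cnj a * a * cinner w (R *v w)"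
      by (simp add: matrix_vector_mult_diff_distrib vector_scalar_commute cinner_diff_left
          cinner_diff_right cinner_scale_left cinner_scale_right algebra_simps)
    also have "\<dots> = - 2 * a * cinner w w + a^2 * cinner w (R *v w)"
      using assms(2) e1 by (simp add: a_def w_def power2_eq_square)
    finally have "Re (cinner (y - a *s w) (R *v (y - a *s w))) = - 2 * t * Q + t^2 * C"
      by (simp add: a_def Q_def C_def power2_eq_square)
    then show ?thesis using pos by metis
  qed
  have "Q = 0"
  proof -
    define t where "t = Q / (C + 1)"
    have t0: "0 \<le> t" using Q0 C0 by (simp add: t_def)
    have tQ: "t * (C + 1) = Q" using C0 by (simp add: t_def)
    have "t^2 * C \<le> t^2 * (C + 1)" by (simp add: mult_left_mono)
    also have "\<dots> = t * Q" using tQ by (simp add: power2_eq_square algebra_simps)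
    finally have "0 \<le> - t * Q" using key[of t] by simp
    then have "t * Q \<le> 0" by simp
    moreover have "t * Q = Q^2 / (C + 1)" using C0 by (simp add: t_def power2_eq_square)
    ultimately have "Q^2 \<le> 0" using C0 by (simp add: divide_le_0_iff)
    then show ?thesis by simp
  qed
  then have "(\<Sum>i\<in>UNIV. (cmod (w $ i))^2) = 0" using \<open>Q = 0\<close> unfolding Q_def Re_cinner_self by blast
  then have "\<forall>i\<in>UNIV. (cmod (w $ i))^2 = 0"
    by (subst (asm) sum_nonneg_eq_0_iff) auto
  then have "w = 0" by (simp add: vec_eq_iff)
  then show ?thesis using w_def by simp
qed


lemma cinner_minus_right: "cinner x (- v) = - cinner x v"
  by (simp add: cinner_def sum_negf)

lemma outer_apply: "outer b h *v x = (\<Sum>j\<in>UNIV. h $ j * x $ j) *s b"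
  by (simp add: outer_def matrix_vector_mult_def vec_eq_iff sum_distrib_left mult_ac)

lemma det_zero_kernel:
  fixes R :: "complex^'n^'n"
  assumes "det R = 0"
  shows "\<exists>x. x \<noteq> 0 \<and> R *v x = 0"
proof -
  have "\<not> inj ((*v) R)"
    using det_nz_iff_inj_gen[OF matrix_vector_mul_linear_gen, of R] assms by simp
  then show ?thesis using vec.linear_inj_iff_eq_0[OF matrix_vector_mul_linear_gen] by blast
qed

theorem proposition4:
  fixes A R :: "complex^'n^'n" and B :: "complex^'n"
  assumes "B \<noteq> 0"
    and "reachable A B"
    and "\<forall>c. eigenvalue_of A c \<longrightarrow> cmod c < 1"
    and "hermitian R" and "psd R" and "det R = 0"
    and "\<exists>H :: complex^'n.
           R - A ** R ** cadj A = outer B H + cadj (outer B H)"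
  shows "cinner B (orth_proj (null_space R) *v B) \<noteq> 0"
proof
  assume a: "cinner B (orth_proj (null_space R) *v B) = 0"
  obtain H :: "complex^'n" where H: "R - A ** R ** cadj A = outer B H + cadj (outer B H)"
    using assms(7) by blast
  have "cinner (proj R B) (proj R B) = cinner B (proj R (proj R B))"
    by (simp add: proj_selfadj)
  also have "\<dots> = 0" using a by (simp add: orth_proj_eq PM_apply proj_id proj_char)
  finally have pB: "proj R B = 0" using cinner_self_eq_0 by blast
  have orthB: "cinner s B = 0" if "s \<in> null_space R" for s
  proof -
    have "cinner s B = cinner (proj R s) B" using that by (simp add: proj_id)
    also have "\<dots> = cinner s (proj R B)" by (simp add: proj_selfadj)
    finally show ?thesis using pB by simp
  qed
  have inv: "cadj A *v x \<in> null_space R" if x: "x \<in> null_space R" for x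
  proof -
    define y where "y = cadj A *v x"
    have Rx: "R *v x = 0" using x by (simp add: null_space_def)
    have m: "(R - A ** R ** cadj A) *v x = - (A *v (R *v y))"
      by (simp add: matrix_vector_mult_diff_rdistrib Rx matrix_vector_mul_assoc[symmetric] y_def)
    have ad: "cinner x (A *v (R *v y)) = cinner y (R *v y)" unfolding y_def by (rule cinner_adj2)
    have "cinner x ((R - A ** R ** cadj A) *v x) = - cinner y (R *v y)"
      unfolding m cinner_minus_right ad ..
    also have "cinner x ((R - A ** R ** cadj A) *v x) = 0"
    proof -
      define c where "c = (\<Sum>j\<in>UNIV. H $ j * x $ j)"
      have "cinner x ((R - A ** R ** cadj A) *v x)
          = cinner x (outer B H *v x) + cinner (outer B H *v x) x"
        unfolding H matrix_vector_mult_add_rdistrib cinner_add_right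
        by (simp add: cinner_adj)
      also have "\<dots> = c * cinner x B + cnj c * cinner B x"
        by (simp add: outer_apply c_def cinner_scale_left cinner_scale_right)
      also have "\<dots> = 0"
        using orthB[OF x] cinner_cnj[of x B] by simp
      finally show ?thesis .
    qed
    finally have "cinner y (R *v y) = 0" by simp
    then have "R *v y = 0" using psd_zero assms(5) by blast
    then show ?thesis by (simp add: null_space_def y_def)
  qed
  have pow: "\<forall>x\<in>null_space R. cinner x (mpow A k *v B) = 0" for k
  proof (induction k)
    case 0
    then show ?case using orthB by simp
  next
    case (Suc k)
    show ?case
    proof
      fix x assume x: "x \<in> null_space R"
      have "cinner x (mpow A (Suc k) *v B) = cinner (cadj A *v x) (mpow A k *v B)"
        by (simp add: matrix_vector_mul_assoc[symmetric] cinner_adj2)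
      also have "\<dots> = 0" using Suc inv[OF x] by blast
      finally show "cinner x (mpow A (Suc k) *v B) = 0" .
    qed
  qed
  define S where "S = {mpow A k *v B | k. k < CARD('n)}"
  have "vec.dim S = vec.dim (UNIV :: (complex^'n) set)"
    using assms(2) by (simp add: reachable_def S_def card_cart_basis)
  then have spanU: "vec.span S = UNIV"
    by (metis vec.dim_eq_full vec.dim_UNIV vec.dimension_def)
  obtain x where x0: "x \<noteq> 0" and Rx: "R *v x = 0" using det_zero_kernel[OF assms(6)] by blast
  then have xN: "x \<in> null_space R" by (simp add: null_space_def)
  have sub: "vec.subspace {v. cinner x v = 0}"
    by (simp add: vec.subspace_def cinner_add_right cinner_scale_right)
  have gen: "\<And>v. v \<in> S \<Longrightarrow> cinner x v = 0" using pow xN by (auto simp: S_def)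
  have "cinner x v = 0" if "v \<in> vec.span S" for v
    using vec.span_induct[where P="\<lambda>v. cinner x v = 0", OF that] sub gen by simp
  then have "cinner x x = 0" using spanU by simp
  then show False using x0 cinner_self_eq_0 by blast
qed

end
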